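(* Let $(D,s,t,k)$ be a reduced instance of Rooted $k$-Distinct Branchings, let $(\hat T,\{B_x\})$ be the $s$-rooted cut decomposition of $D$, and let $\hat P=x_1\dots x_\ell$ be a degenerate path of $\hat T$ such that there are no two arcs $x_iu,x_ju\in A^+\cap R_t$ with $i<j$ and the same head $u$. If $(D,s,t,k)$ is not a positive instance, then $|A^+\cap R_t|\le 2k+1$.
   Context: Digraphs are finite and without loops; paths are directed. An out-tree (in-tree) is an oriented tree with exactly one vertex of in-degree zero (out-degree zero), its root; an out-branching (in-branching) of $D$ is a spanning out-tree (in-tree). An instance $(D,s,t,k)$ of Rooted $k$-Distinct Branchings ($D$ a digraph, $s,t\in V(D)$, $k$ an integer) is positive if $D$ has an out-branching $T^+$ rooted at $s$ and an in-branching $T^-$ rooted at $t$ with $|A(T^+)\setminus A(T^-)|\ge k$. It is reduced if $D$ has an out-branching rooted at $s$, an in-branching rooted at $t$, and every arc of $D$ lies in some out-branching rooted at $s$ or in some in-branching rooted at $t$. $R_t$ is the set of arcs lying in no in-branching rooted at $t$. A vertex $v$ is bi-reachable from $r$ if there are two internally vertex-disjoint directed paths from $r$ to $v$. For a digraph $H$ with at least two vertices and $r\in V(H)$ such that every vertex of $H$ is reachable from $r$, the diblock $B_r$ of $r$ in $H$ is the set of all vertices bi-reachable from $r$, together with $r$ and all out-neighbours of $r$. For $x\in B_r\setminus\{r\}$ let $X_x$ be the set of vertices $v\notin B_r$ such that every directed $r$–$v$ path intersects $B_r$ for the last time in $x$; $x$ is a bottleneck of $B_r$ if $X_x\ne\emptyset$.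 The $r$-rooted cut decomposition $(\hat T,\{B_x\}_{x\in V(\hat T)})$ of $H$ is defined recursively: $\hat T$ is a rooted tree with root $r$; the set associated with the root is $B_r$; the children of $r$ are the bottlenecks of $B_r$; for each bottleneck $x$, the subtree rooted at $x$ with its sets is the $x$-rooted cut decomposition of $H[X_x\cup\{x\}]$. $B_x$ is degenerate if $x$ is an internal node of $\hat T$ and $|B_x|=2$. A path $x_1\dots x_\ell$ in $\hat T$ is degenerate if it is a subpath of a root-to-leaf path of $\hat T$ (with $x_{i+1}$ a child of $x_i$) and every $B_{x_i}$ is degenerate. For such a path $\hat P$, $A^+$ is the set of arcs $x_iu$ of $D$ with $x_i\in V(\hat P)$ and $u\notin V(\hat P)$, $u\in B_y$ for some proper ancestor $y$ of $x_1$ in $\hat T$. *)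

theory Defs
  imports Main
begin

type_synonym 'a dg = "'a set \<times> ('a \<times> 'a) set"

definition digraph :: "'a dg \<Rightarrow> bool" where
  "digraph H \<longleftrightarrow> finite (fst H) \<and> snd H \<subseteq> fst H \<times> fst H \<and> (\<forall>v. (v, v) \<notin> snd H)"

definition is_path :: "'a dg \<Rightarrow> 'a list \<Rightarrow> bool" where
  "is_path H p \<longleftrightarrow> p \<noteq> [] \<and> distinct p \<and> set p \<subseteq> fst H \<and>
     (\<forall>i. Suc i < length p \<longrightarrow> (p ! i, p ! Suc i) \<in> snd H)"

definition path_from_to :: "'a dg \<Rightarrow> 'a \<Rightarrow> 'a \<Rightarrow> 'a list \<Rightarrow> bool" where
  "path_from_to H u v p \<longleftrightarrow> is_path H p \<and> hd p = u \<and> last p = v"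

definition oriented_tree :: "'a set \<Rightarrow> ('a \<times> 'a) set \<Rightarrow> bool" where
  "oriented_tree V T \<longleftrightarrow> finite V \<and> V \<noteq> {} \<and> T \<subseteq> V \<times> V \<and>
     (\<forall>u v. (u, v) \<in> T \<longrightarrow> u \<noteq> v \<and> (v, u) \<notin> T) \<and>
     (\<forall>u\<in>V. \<forall>v\<in>V. (u, v) \<in> (T \<union> T\<inverse>)\<^sup>*) \<and>
     card T + 1 = card V"

definition indeg :: "('a \<times> 'a) set \<Rightarrow> 'a \<Rightarrow> nat" where
  "indeg T v = card {u. (u, v) \<in> T}"

definition outdeg :: "('a \<times> 'a) set \<Rightarrow> 'a \<Rightarrow> nat" where
  "outdeg T v = card {u. (v, u) \<in> T}"

definition out_tree :: "'a set \<Rightarrow> ('a \<times> 'a) set \<Rightarrow> 'a \<Rightarrow> bool" where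
  "out_tree V T r \<longleftrightarrow> oriented_tree V T \<and> {v \<in> V. indeg T v = 0} = {r}"

definition in_tree :: "'a set \<Rightarrow> ('a \<times> 'a) set \<Rightarrow> 'a \<Rightarrow> bool" where
  "in_tree V T r \<longleftrightarrow> oriented_tree V T \<and> {v \<in> V. outdeg T v = 0} = {r}"

definition out_branching :: "'a dg \<Rightarrow> 'a \<Rightarrow> ('a \<times> 'a) set \<Rightarrow> bool" where
  "out_branching D r T \<longleftrightarrow> T \<subseteq> snd D \<and> out_tree (fst D) T r"

definition in_branching :: "'a dg \<Rightarrow> 'a \<Rightarrow> ('a \<times> 'a) set \<Rightarrow> bool" where
  "in_branching D r T \<longleftrightarrow> T \<subseteq> snd D \<and> in_tree (fst D) T r"

definition positive_instance :: "'a dg \<Rightarrow> 'a \<Rightarrow> 'a \<Rightarrow> int \<Rightarrow> bool" where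
  "positive_instance D s t k \<longleftrightarrow>
     (\<exists>Tp Tm. out_branching D s Tp \<and> in_branching D t Tm \<and> int (card (Tp - Tm)) \<ge> k)"

definition reduced :: "'a dg \<Rightarrow> 'a \<Rightarrow> 'a \<Rightarrow> bool" where
  "reduced D s t \<longleftrightarrow> (\<exists>T. out_branching D s T) \<and> (\<exists>T. in_branching D t T) \<and>
     (\<forall>a\<in>snd D. (\<exists>T. out_branching D s T \<and> a \<in> T) \<or> (\<exists>T. in_branching D t T \<and> a \<in> T))"

definition Rt :: "'a dg \<Rightarrow> 'a \<Rightarrow> ('a \<times> 'a) set" where
  "Rt D t = {a \<in> snd D. \<not> (\<exists>T. in_branching D t T \<and> a \<in> T)}"

definition interior :: "'a list \<Rightarrow> 'a set" where
  "interior p = set (butlast (tl p))"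

definition bireachable :: "'a dg \<Rightarrow> 'a \<Rightarrow> 'a \<Rightarrow> bool" where
  "bireachable H r v \<longleftrightarrow> (\<exists>p q. path_from_to H r v p \<and> path_from_to H r v q \<and> p \<noteq> q \<and>
     interior p \<inter> interior q = {})"

definition diblock :: "'a dg \<Rightarrow> 'a \<Rightarrow> 'a set" where
  "diblock H r = {v. bireachable H r v} \<union> {r} \<union> {v. (r, v) \<in> snd H}"

text \<open>X_x: vertices outside B_r all of whose r-paths leave B_r for the last time at x.\<close>
definition Xset :: "'a dg \<Rightarrow> 'a \<Rightarrow> 'a \<Rightarrow> 'a set" where
  "Xset H r x = {v \<in> fst H. v \<notin> diblock H r \<and> (\<exists>p. path_from_to H r v p) \<and>
     (\<forall>p. path_from_to H r v p \<longrightarrow> last (filter (\<lambda>w. w \<in> diblock H r) p) = x)}"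

definition bottleneck :: "'a dg \<Rightarrow> 'a \<Rightarrow> 'a \<Rightarrow> bool" where
  "bottleneck H r x \<longleftrightarrow> x \<in> diblock H r - {r} \<and> Xset H r x \<noteq> {}"

definition induced :: "'a dg \<Rightarrow> 'a set \<Rightarrow> 'a dg" where
  "induced H S = (S, snd H \<inter> (S \<times> S))"

text \<open>Nodes of the r-rooted cut decomposition of H: cd_node H r x Hx means that x is a
  node and the subtree rooted at x is the x-rooted cut decomposition of Hx
  (so B_x = diblock Hx x).\<close>
inductive cd_node :: "'a dg \<Rightarrow> 'a \<Rightarrow> 'a \<Rightarrow> 'a dg \<Rightarrow> bool" for H r where
  root: "cd_node H r r H"
| child: "cd_node H r x Hx \<Longrightarrow> bottleneck Hx x y \<Longrightarrow>
          cd_node H r y (induced Hx (Xset Hx x y \<union> {y}))"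

definition cd_child :: "'a dg \<Rightarrow> 'a \<Rightarrow> 'a \<Rightarrow> 'a \<Rightarrow> bool" where
  "cd_child H r x y \<longleftrightarrow> (\<exists>Hx. cd_node H r x Hx \<and> bottleneck Hx x y)"

definition cd_bag :: "'a dg \<Rightarrow> 'a \<Rightarrow> 'a \<Rightarrow> 'a set" where
  "cd_bag H r x = {u. \<exists>Hx. cd_node H r x Hx \<and> u \<in> diblock Hx x}"

definition cd_degenerate :: "'a dg \<Rightarrow> 'a \<Rightarrow> 'a \<Rightarrow> bool" where
  "cd_degenerate H r x \<longleftrightarrow> (\<exists>y. cd_child H r x y) \<and> card (cd_bag H r x) = 2"

definition degenerate_path :: "'a dg \<Rightarrow> 'a \<Rightarrow> 'a list \<Rightarrow> bool" where
  "degenerate_path H r xs \<longleftrightarrow> xs \<noteq> [] \<and> (\<forall>x\<in>set xs. cd_degenerate H r x) \<and>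
     (\<forall>i. Suc i < length xs \<longrightarrow> cd_child H r (xs ! i) (xs ! Suc i))"

definition Aplus :: "'a dg \<Rightarrow> 'a \<Rightarrow> 'a list \<Rightarrow> ('a \<times> 'a) set" where
  "Aplus D s xs = {(x, u) \<in> snd D. x \<in> set xs \<and> u \<notin> set xs \<and>
     (\<exists>y. (y, hd xs) \<in> {(a, b). cd_child D s a b}\<^sup>+ \<and> u \<in> cd_bag D s y)}"

end

theory Submission
  imports Defs
begin


fun wlk :: "('a \<times> 'a) set \<Rightarrow> 'a list \<Rightarrow> bool" where
  "wlk E [] = False"
| "wlk E [x] = True"
| "wlk E (x # y # zs) = ((x, y) \<in> E \<and> wlk E (y # zs))"

lemma wlk_nth: "wlk E p \<longleftrightarrow> p \<noteq> [] \<and> (\<forall>i. Suc i < length p \<longrightarrow> (p ! i, p ! Suc i) \<in> E)"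
proof (induction E p rule: wlk.induct)
  case (3 E x y zs)
  show ?case
  proof
    assume h: "wlk E (x # y # zs)"
    show "x # y # zs \<noteq> [] \<and> (\<forall>i. Suc i < length (x # y # zs) \<longrightarrow> ((x # y # zs) ! i, (x # y # zs) ! Suc i) \<in> E)"
    proof (intro conjI allI impI)
      fix i assume "Suc i < length (x # y # zs)"
      then show "((x # y # zs) ! i, (x # y # zs) ! Suc i) \<in> E"
        using h 3 by (cases i) auto
    qed simp
  next
    assume h: "x # y # zs \<noteq> [] \<and> (\<forall>i. Suc i < length (x # y # zs) \<longrightarrow> ((x # y # zs) ! i, (x # y # zs) ! Suc i) \<in> E)"
    have "(x,y) \<in> E" using h[THEN conjunct2, rule_format, of 0] by simp
    moreover have "\<forall>i. Suc i < length (y # zs) \<longrightarrow> ((y # zs) ! i, (y # zs) ! Suc i) \<in> E"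
      using h[THEN conjunct2, rule_format, of "Suc _"] by auto
    ultimately show "wlk E (x # y # zs)" using 3 by simp
  qed
qed auto

lemma is_path_wlk: "is_path H p \<longleftrightarrow> distinct p \<and> set p \<subseteq> fst H \<and> wlk (snd H) p"
  unfolding is_path_def wlk_nth by auto

lemma wlk_append: "xs \<noteq> [] \<Longrightarrow> ys \<noteq> [] \<Longrightarrow>
   wlk E (xs @ ys) \<longleftrightarrow> wlk E xs \<and> wlk E ys \<and> (last xs, hd ys) \<in> E"
proof (induction xs rule: induct_list012)
  case (3 x y zs)
  then show ?case by simp
next
  case (2 x) then show ?case by (cases ys) auto
qed simp

lemma wlk_Cons: "wlk E (x # xs) \<longleftrightarrow> (xs = [] \<or> ((x, hd xs) \<in> E \<and> wlk E xs))"
  by (cases xs) auto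

lemma wlk_join: "wlk E (xs @ [v]) \<Longrightarrow> wlk E (v # ys) \<Longrightarrow> wlk E (xs @ v # ys)"
  by (induction xs rule: induct_list012) auto

lemma wlk_mono: "wlk E p \<Longrightarrow> E \<subseteq> F \<Longrightarrow> wlk F p"
  by (induction E p rule: wlk.induct) auto

lemma wlk_restrict: "wlk E p \<Longrightarrow> set p \<subseteq> S \<Longrightarrow> wlk (E \<inter> (S \<times> S)) p"
  by (induction E p rule: wlk.induct) auto

lemma wlk_shortcut:
  assumes "wlk E p"
  shows "\<exists>q. wlk E q \<and> distinct q \<and> hd q = hd p \<and> last q = last p \<and> set q \<subseteq> set p"
  using assms
proof (induction "length p" arbitrary: p rule: less_induct)
  case less
  show ?case
  proof (cases "distinct p")
    case True then show ?thesis using less by blast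
  next
    case False
    then obtain a b c x where p: "p = a @ [x] @ b @ [x] @ c" using not_distinct_decomp by blast
    have w1: "wlk E (a @ [x])" using less(2) unfolding p
      by (metis append_Cons append_assoc append_is_Nil_conv list.distinct(1) wlk_append)
    have w2: "wlk E (x # c)" using less(2) unfolding p
      by (metis append.assoc append_Cons append_is_Nil_conv list.discI wlk_append append.left_neutral)
    have "wlk E (a @ x # c)" by (rule wlk_join[OF w1 w2])
    moreover have "length (a @ x # c) < length p" unfolding p by simp
    ultimately obtain q where "wlk E q \<and> distinct q \<and> hd q = hd (a @ x # c) \<and> last q = last (a @ x # c) \<and> set q \<subseteq> set (a @ x # c)"
      using less(1) by blast
    moreover have "hd (a @ x # c) = hd p" unfolding p by (cases a) auto
    moreover have "last (a @ x # c) = last p" unfolding p by (cases c) auto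
    moreover have "set (a @ x # c) \<subseteq> set p" unfolding p by auto
    ultimately show ?thesis by (metis order.trans)
  qed
qed

lemma wlk_rtrancl: "wlk E p \<Longrightarrow> w \<in> set p \<Longrightarrow> (hd p, w) \<in> E\<^sup>*"
  by (induction E p arbitrary: w rule: wlk.induct) (auto intro: converse_rtrancl_into_rtrancl)

lemma wlk_rtrancl_last: "wlk E p \<Longrightarrow> w \<in> set p \<Longrightarrow> (w, last p) \<in> E\<^sup>*"
  by (induction E p arbitrary: w rule: wlk.induct) (auto intro: converse_rtrancl_into_rtrancl)

lemma rtrancl_wlk: "(a, b) \<in> E\<^sup>* \<Longrightarrow> \<exists>p. wlk E p \<and> hd p = a \<and> last p = b \<and> set p \<subseteq> {w. (w, b) \<in> E\<^sup>*}"
proof (induction rule: converse_rtrancl_induct)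
  case base
  then show ?case by (rule exI[of _ "[b]"]) auto
next
  case (step y z)
  then obtain p where p: "wlk E p" "hd p = z" "last p = b" "set p \<subseteq> {w. (w, b) \<in> E\<^sup>*}" by blast
  have "p \<noteq> []" using p(1) by auto
  then have "wlk E (y # p)" using p step by (cases p) auto
  moreover have "(y, b) \<in> E\<^sup>*" using step by (meson converse_rtrancl_into_rtrancl)
  ultimately show ?case using p \<open>p \<noteq> []\<close> by (intro exI[of _ "y # p"]) auto
qed


definition tstr :: "'a set \<Rightarrow> ('a \<times> 'a) set \<Rightarrow> 'a \<Rightarrow> ('a \<times> 'a) set \<Rightarrow> bool" where
  "tstr V E s T \<longleftrightarrow> T \<subseteq> E \<and> T \<subseteq> V \<times> V \<and> s \<in> V \<and> (\<forall>a. (a, s) \<notin> T) \<and>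
     (\<forall>v\<in>V - {s}. \<exists>a. (a, v) \<in> T) \<and> (\<forall>a b v. (a, v) \<in> T \<longrightarrow> (b, v) \<in> T \<longrightarrow> a = b) \<and>
     (\<forall>v\<in>V. (s, v) \<in> T\<^sup>*)"
lemma tstrD: assumes "tstr V E s T"
  shows "T \<subseteq> E" "T \<subseteq> V \<times> V" "s \<in> V" "\<forall>a. (a, s) \<notin> T"
     "\<forall>v\<in>V - {s}. \<exists>a. (a, v) \<in> T" "\<forall>a b v. (a, v) \<in> T \<longrightarrow> (b, v) \<in> T \<longrightarrow> a = b"
     "\<forall>v\<in>V. (s, v) \<in> T\<^sup>*"
  using assms unfolding tstr_def by simp_all


lemma no_cycle:
  assumes nos: "\<forall>a. (a, s) \<notin> T" and uniq: "\<forall>a b v. (a, v) \<in> T \<longrightarrow> (b, v) \<in> T \<longrightarrow> a = b"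
    and "(s, w) \<in> T\<^sup>*"
  shows "(w, w) \<notin> T\<^sup>+"
  using assms(3)
proof (induction rule: rtrancl_induct)
  case base
  show ?case
  proof
    assume "(s, s) \<in> T\<^sup>+"
    then obtain q where "(q, s) \<in> T" by (meson tranclE)
    then show False using nos by blast
  qed
next
  case (step y z)
  show ?case
  proof
    assume "(z, z) \<in> T\<^sup>+"
    then obtain q where q: "(z, q) \<in> T\<^sup>*" "(q, z) \<in> T" by (meson tranclD2)
    then have "q = y" using uniq step(2) by blast
    then have "(y, y) \<in> T\<^sup>+" using q step(2) by (meson rtrancl_into_trancl2)
    then show False using step(3) by blast
  qed
qed



lemma digraphD: assumes "digraph D"
  shows "finite (fst D)" "snd D \<subseteq> fst D \<times> fst D" "\<And>v. (v, v) \<notin> snd D"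
  using assms unfolding digraph_def by simp_all

lemma tstr_out_branching:
  assumes dg: "digraph D" and ts: "tstr (fst D) (snd D) s T"
  shows "out_branching D s T"
proof -
  let ?V = "fst D"
  note T = tstrD[OF ts]
  note G = digraphD[OF dg]
  have anti: "\<forall>u v. (u, v) \<in> T \<longrightarrow> u \<noteq> v \<and> (v, u) \<notin> T"
  proof (intro allI impI conjI)
    fix u v assume uv: "(u, v) \<in> T"
    then have "(u, v) \<in> snd D" using T(1) by blast
    then show "u \<noteq> v" using G(3) by metis
    show "(v, u) \<notin> T"
    proof
      assume "(v, u) \<in> T"
      then have "(u, u) \<in> T\<^sup>+" using uv by auto
      moreover have "u \<in> ?V" using T(2) uv by blast
      then have "(s, u) \<in> T\<^sup>*" using T(7) by blast
      ultimately show False using no_cycle[OF T(4) T(6)] by blast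
    qed
  qed
  have conn: "\<forall>u\<in>?V. \<forall>v\<in>?V. (u, v) \<in> (T \<union> T\<inverse>)\<^sup>*"
  proof (intro ballI)
    fix u v assume "u \<in> ?V" "v \<in> ?V"
    then have a: "(s, u) \<in> T\<^sup>*" "(s, v) \<in> T\<^sup>*" using T(7) by auto
    have sub: "T\<^sup>* \<subseteq> (T \<union> T\<inverse>)\<^sup>*" by (rule rtrancl_mono) blast
    have "(s, u) \<in> (T \<union> T\<inverse>)\<^sup>*" using a(1) sub by blast
    then have "(u, s) \<in> ((T \<union> T\<inverse>)\<inverse>)\<^sup>*" by (simp add: rtrancl_converse)
    then have "(u, s) \<in> (T \<union> T\<inverse>)\<^sup>*" by (simp add: converse_Un sup_commute)
    moreover have "(s, v) \<in> (T \<union> T\<inverse>)\<^sup>*" using a(2) sub by blast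
    ultimately show "(u, v) \<in> (T \<union> T\<inverse>)\<^sup>*" by simp
  qed
  have inj: "inj_on snd T" using T(6) by (auto simp: inj_on_def)
  have img: "snd ` T = ?V - {s}"
  proof
    show "snd ` T \<subseteq> ?V - {s}" using T(2,4) by auto
    show "?V - {s} \<subseteq> snd ` T"
    proof
      fix v assume "v \<in> ?V - {s}"
      then obtain a where "(a, v) \<in> T" using T(5) by blast
      then show "v \<in> snd ` T" by force
    qed
  qed
  have "card T = card (?V - {s})" using bij_betw_same_card[of snd T] inj img unfolding bij_betw_def by blast
  also have "\<dots> = card ?V - 1" using T(3) G(1) by simp
  finally have cT: "card T + 1 = card ?V" using T(3) G(1)
    by (metis One_nat_def Suc_pred card_gt_0_iff empty_iff add.commute plus_1_eq_Suc)
  have ot: "oriented_tree ?V T"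
    unfolding oriented_tree_def using G(1) T(2,3) anti conn cT by (intro conjI) auto
  have i0: "indeg T s = 0" using T(4) unfolding indeg_def by simp
  have i1: "indeg T v \<noteq> 0" if "v \<in> ?V" "v \<noteq> s" for v
  proof -
    have "v \<in> ?V - {s}" using that by blast
    then have "\<exists>a. (a, v) \<in> T" using T(5) by blast
    then obtain a where a: "(a, v) \<in> T" by blast
    have "finite {u. (u, v) \<in> T}"
      using finite_subset[of "{u. (u, v) \<in> T}" ?V] T(2) G(1) by blast
    then show ?thesis using a unfolding indeg_def by auto
  qed
  have "{v \<in> ?V. indeg T v = 0} = {s}" using i0 i1 T(3) by blast
  then show ?thesis unfolding out_branching_def out_tree_def using ot T(1) by simp
qed


lemma out_branching_tstr:
  assumes dg: "digraph D" and ob: "out_branching D s T"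
  shows "tstr (fst D) (snd D) s T"
proof -
  let ?V = "fst D"
  have obd: "T \<subseteq> snd D \<and> oriented_tree ?V T \<and> {v \<in> ?V. indeg T v = 0} = {s}"
    using ob unfolding out_branching_def out_tree_def by simp
  then have T1: "T \<subseteq> snd D" and ot: "oriented_tree ?V T" and z: "{v \<in> ?V. indeg T v = 0} = {s}"
    by auto
  have otd: "finite ?V \<and> T \<subseteq> ?V \<times> ?V \<and> card T + 1 = card ?V \<and> (\<forall>u\<in>?V. \<forall>v\<in>?V. (u, v) \<in> (T \<union> T\<inverse>)\<^sup>*)"
    using ot unfolding oriented_tree_def by simp
  then have fin: "finite ?V" and TV: "T \<subseteq> ?V \<times> ?V" and cT: "card T + 1 = card ?V"
    and conn: "\<forall>u\<in>?V. \<forall>v\<in>?V. (u, v) \<in> (T \<union> T\<inverse>)\<^sup>*"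
    by auto
  have sV: "s \<in> ?V" using z by blast
  have finin: "finite {u. (u, v) \<in> T}" for v
    using finite_subset[of "{u. (u, v) \<in> T}" ?V] TV fin by blast
  have nos: "\<forall>a. (a, s) \<notin> T"
  proof -
    have "indeg T s = 0" using z by blast
    then show ?thesis using finin[of s] unfolding indeg_def by auto
  qed
  have pos: "indeg T v \<ge> 1" if "v \<in> ?V - {s}" for v
  proof -
    have "indeg T v \<noteq> 0"
    proof
      assume "indeg T v = 0"
      then have "v \<in> {v \<in> ?V. indeg T v = 0}" using that by blast
      then show False using z that by blast
    qed
    then show ?thesis by simp
  qed
  have sumeq: "card T = (\<Sum>v\<in>?V. indeg T v)"
  proof -
    have "T = (\<Union>v\<in>?V. {a \<in> T. snd a = v})" using TV by auto
    moreover have "finite T" using finite_subset[OF TV] fin by blast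
    ultimately have "card T = (\<Sum>v\<in>?V. card {a \<in> T. snd a = v})"
      using card_UN_disjoint[of ?V "\<lambda>v. {a \<in> T. snd a = v}"] fin by auto
    also have "\<dots> = (\<Sum>v\<in>?V. indeg T v)"
    proof (rule sum.cong)
      fix v
      have "bij_betw fst {a \<in> T. snd a = v} {u. (u, v) \<in> T}"
        unfolding bij_betw_def inj_on_def by force
      then show "card {a \<in> T. snd a = v} = indeg T v" unfolding indeg_def by (rule bij_betw_same_card)
    qed simp
    finally show ?thesis .
  qed
  have is0: "indeg T s = 0" using z by blast
  have "(\<Sum>v\<in>?V. indeg T v) = (\<Sum>v\<in>?V - {s}. indeg T v)"
    using is0 sV fin by (simp add: sum.remove)
  then have s2: "(\<Sum>v\<in>?V - {s}. indeg T v) = (\<Sum>v\<in>?V - {s}. 1)"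
    using sumeq cT sV fin by simp
  have one: "indeg T v = 1" if "v \<in> ?V - {s}" for v
    using sum_mono_inv[OF s2[symmetric], of v] pos that fin by auto
  have uniq: "\<forall>a b v. (a, v) \<in> T \<longrightarrow> (b, v) \<in> T \<longrightarrow> a = b"
  proof (intro allI impI)
    fix a b v assume ab: "(a, v) \<in> T" "(b, v) \<in> T"
    then have "v \<in> ?V - {s}" using TV nos by blast
    then have "card {u. (u, v) \<in> T} = 1" using one unfolding indeg_def by blast
    then show "a = b" using ab by (metis (mono_tags, lifting) card_1_singletonE mem_Collect_eq singletonD)
  qed
  have ex: "\<forall>v\<in>?V - {s}. \<exists>a. (a, v) \<in> T"
  proof
    fix v assume "v \<in> ?V - {s}"
    then have "indeg T v = 1" using one by blast
    then have "{u. (u, v) \<in> T} \<noteq> {}" unfolding indeg_def by (metis card.empty zero_neq_one)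
    then show "\<exists>a. (a, v) \<in> T" by blast
  qed
  have reach: "\<forall>v\<in>?V. (s, v) \<in> T\<^sup>*"
  proof
    fix v assume "v \<in> ?V"
    then have "(s, v) \<in> (T \<union> T\<inverse>)\<^sup>*" using conn sV by blast
    then show "(s, v) \<in> T\<^sup>*"
    proof (induction rule: rtrancl_induct)
      case (step y z)
      show ?case
      proof (cases "(y, z) \<in> T")
        case True then show ?thesis using step by auto
      next
        case False
        then have zy: "(z, y) \<in> T" using step by blast
        then have "y \<noteq> s" using nos by blast
        then have "\<exists>q. (s, q) \<in> T\<^sup>* \<and> (q, y) \<in> T" using step(3)
          by (auto elim: rtranclE)
        then obtain q where q: "(s, q) \<in> T\<^sup>*" "(q, y) \<in> T" by blast
        then have "q = z" using uniq zy by blast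
        then show ?thesis using q by simp
      qed
    qed simp
  qed
  show ?thesis unfolding tstr_def using T1 TV sV nos ex uniq reach by (intro conjI) simp_all
qed



lemma cut_arc:
  assumes "(s, w) \<in> E\<^sup>*" "s \<in> U" "w \<notin> U"
  shows "\<exists>a b. (a, b) \<in> E \<and> a \<in> U \<and> b \<notin> U"
  using assms by (induction rule: rtrancl_induct) auto

lemma extend:
  assumes fin: "finite V" and EV: "E \<subseteq> V \<times> V" and reach: "\<forall>v\<in>V. (s, v) \<in> E\<^sup>*"
    and U0: "U0 \<subseteq> V" and t0: "tstr U0 E s T0"
  shows "\<exists>T. tstr V E s T \<and> T0 \<subseteq> T \<and> (\<forall>a v. (a, v) \<in> T \<longrightarrow> v \<in> U0 \<longrightarrow> (a, v) \<in> T0)"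
  using U0 t0
proof (induction "card (V - U0)" arbitrary: U0 T0 rule: less_induct)
  case less
  show ?case
  proof (cases "U0 = V")
    case True then show ?thesis using less by blast
  next
    case False
    then obtain w where w: "w \<in> V" "w \<notin> U0" using less(2) by blast
    have sU: "s \<in> U0" using tstrD[OF less(3)] by blast
    obtain a b where ab: "(a, b) \<in> E" "a \<in> U0" "b \<notin> U0" using cut_arc[OF _ sU w(2)] reach w(1) by blast
    have bV: "b \<in> V" using ab EV by blast
    let ?U1 = "insert b U0" and ?T1 = "insert (a, b) T0"
    have t1: "tstr ?U1 E s ?T1"
    proof -
      have T: "T0 \<subseteq> E" "T0 \<subseteq> U0 \<times> U0" "s \<in> U0" "\<forall>a. (a, s) \<notin> T0"
        "\<forall>v\<in>U0 - {s}. \<exists>a. (a, v) \<in> T0" "\<forall>a b v. (a, v) \<in> T0 \<longrightarrow> (b, v) \<in> T0 \<longrightarrow> a = b"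
        "\<forall>v\<in>U0. (s, v) \<in> T0\<^sup>*" using tstrD[OF less(3)] by blast+
      have r: "\<forall>v\<in>?U1. (s, v) \<in> ?T1\<^sup>*"
      proof
        fix v assume "v \<in> ?U1"
        moreover have "T0\<^sup>* \<subseteq> ?T1\<^sup>*" by (rule rtrancl_mono) blast
        moreover have "(s, a) \<in> T0\<^sup>*" using T(7) ab by blast
        ultimately show "(s, v) \<in> ?T1\<^sup>*" using T(7)
        proof (cases "v = b")
          case True
          have "(s, a) \<in> ?T1\<^sup>*" using \<open>(s, a) \<in> T0\<^sup>*\<close> \<open>T0\<^sup>* \<subseteq> ?T1\<^sup>*\<close> by blast
          then show ?thesis using True by (meson insertI1 rtrancl.rtrancl_into_rtrancl)
        next
          case False
          then show ?thesis using \<open>v \<in> ?U1\<close> T(7) \<open>T0\<^sup>* \<subseteq> ?T1\<^sup>*\<close> by blast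
        qed
      qed
      have bs: "b \<noteq> s" using ab(3) sU by blast
      have nb: "\<forall>x. (x, b) \<notin> T0" using T(2) ab(3) by blast
      have ex: "\<forall>v\<in>?U1 - {s}. \<exists>x. (x, v) \<in> ?T1"
      proof
        fix v assume v: "v \<in> ?U1 - {s}"
        show "\<exists>x. (x, v) \<in> ?T1"
        proof (cases "v = b")
          case False
          then have "v \<in> U0 - {s}" using v by blast
          then have "\<exists>x. (x, v) \<in> T0" using T(5) by blast
          then show ?thesis by blast
        qed blast
      qed
      have un: "\<forall>x y v. (x, v) \<in> ?T1 \<longrightarrow> (y, v) \<in> ?T1 \<longrightarrow> x = y"
        using T(6) nb by blast
      have f1: "?T1 \<subseteq> E" using T(1) ab(1) by blast
      have f2: "?T1 \<subseteq> ?U1 \<times> ?U1" using T(2) ab(2) by blast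
      have f3: "\<forall>x. (x, s) \<notin> ?T1" using T(4) bs by blast
      have f4: "s \<in> ?U1" using sU by blast
      show ?thesis unfolding tstr_def using f1 f2 f4 f3 ex un r by (intro conjI) assumption+
    qed
    have "V - ?U1 = (V - U0) - {b}" by blast
    moreover have "b \<in> V - U0" using bV ab(3) by blast
    ultimately have c: "card (V - ?U1) < card (V - U0)" using fin
      by (metis card_Diff1_less finite_Diff)
    have sub: "?U1 \<subseteq> V" using less(2) bV by blast
    have "\<exists>T. tstr V E s T \<and> ?T1 \<subseteq> T \<and> (\<forall>x v. (x, v) \<in> T \<longrightarrow> v \<in> ?U1 \<longrightarrow> (x, v) \<in> ?T1)"
      by (rule less(1)[OF c sub t1])
    then obtain T where T: "tstr V E s T" "?T1 \<subseteq> T"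
      "\<forall>x v. (x, v) \<in> T \<longrightarrow> v \<in> ?U1 \<longrightarrow> (x, v) \<in> ?T1" by blast
    have "T0 \<subseteq> T" using T(2) by blast
    moreover have "\<forall>x v. (x, v) \<in> T \<longrightarrow> v \<in> U0 \<longrightarrow> (x, v) \<in> T0"
    proof (intro allI impI)
      fix x v assume "(x, v) \<in> T" "v \<in> U0"
      then have "(x, v) \<in> ?T1" using T(3) by blast
      then show "(x, v) \<in> T0" using \<open>v \<in> U0\<close> ab(3) by blast
    qed
    ultimately show ?thesis using T(1) by blast
  qed
qed



lemma wlk_prefix: "wlk E (xs @ ys) \<Longrightarrow> xs \<noteq> [] \<Longrightarrow> wlk E xs"
  by (cases "ys = []") (auto simp: wlk_append)

lemma wlk_suffix: "wlk E (xs @ ys) \<Longrightarrow> ys \<noteq> [] \<Longrightarrow> wlk E ys"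
  by (cases "xs = []") (auto simp: wlk_append)

lemma path_split:
  assumes "path_from_to H a b p" "c \<in> set p"
  shows "\<exists>p1 p2. p = p1 @ c # p2 \<and> path_from_to H a c (p1 @ [c]) \<and> path_from_to H c b (c # p2)"
proof -
  obtain p1 p2 where p: "p = p1 @ c # p2" using split_list[OF assms(2)] by blast
  have P: "distinct p" "set p \<subseteq> fst H" "wlk (snd H) p" "hd p = a" "last p = b"
    using assms(1) unfolding path_from_to_def is_path_wlk by auto
  have w: "wlk (snd H) ((p1 @ [c]) @ p2)" using P(3) p by simp
  have w1: "wlk (snd H) (p1 @ [c])" using wlk_prefix[OF w] by simp
  have w2: "wlk (snd H) (c # p2)" using wlk_suffix[of _ p1 "c # p2"] P(3) p by simp
  have "path_from_to H a c (p1 @ [c])"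
    unfolding path_from_to_def is_path_wlk using P p w1 by (cases p1) auto
  moreover have "path_from_to H c b (c # p2)"
    unfolding path_from_to_def is_path_wlk using P p w2 by (cases p2) auto
  ultimately show ?thesis using p by blast
qed

lemma path_hd_in: "path_from_to H a b p \<Longrightarrow> a \<in> set p"
  unfolding path_from_to_def is_path_def by auto

lemma path_last_in: "path_from_to H a b p \<Longrightarrow> b \<in> set p"
  unfolding path_from_to_def is_path_def by auto

lemma path_set: "path_from_to H a b p \<Longrightarrow> set p \<subseteq> fst H"
  unfolding path_from_to_def is_path_def by auto

lemma wlk_path:
  assumes "wlk (snd H) w" "set w \<subseteq> fst H" "hd w = a" "last w = b"
  shows "\<exists>q. path_from_to H a b q \<and> set q \<subseteq> set w"
proof -
  obtain q where q: "wlk (snd H) q" "distinct q" "hd q = hd w" "last q = last w" "set q \<subseteq> set w"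
    using wlk_shortcut[OF assms(1)] by blast
  then have "path_from_to H a b q" unfolding path_from_to_def is_path_wlk using assms by auto
  then show ?thesis using q by blast
qed

lemma interior_cover: "p \<noteq> [] \<Longrightarrow> set p \<subseteq> {hd p, last p} \<union> interior p"
proof (cases p)
  case (Cons x q)
  assume "p \<noteq> []"
  show ?thesis
  proof (cases "q = []")
    case True then show ?thesis using Cons by simp
  next
    case False
    then have "set q = set (butlast q) \<union> {last q}"
      by (metis append_butlast_last_id set_append empty_set list.simps(15) sup_bot_left insert_is_Un)
    then show ?thesis using Cons False unfolding interior_def by auto
  qed
qed simp

lemma diblock_sub: "snd H \<subseteq> fst H \<times> fst H \<Longrightarrow> r \<in> fst H \<Longrightarrow> diblock H r \<subseteq> fst H"
proof
  fix v assume a: "snd H \<subseteq> fst H \<times> fst H" "r \<in> fst H" and v: "v \<in> diblock H r"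
  then have "bireachable H r v \<or> v = r \<or> (r, v) \<in> snd H" unfolding diblock_def by blast
  then show "v \<in> fst H"
  proof (elim disjE)
    assume "bireachable H r v"
    then obtain p where p: "path_from_to H r v p" unfolding bireachable_def by blast
    show ?thesis using path_last_in[OF p] path_set[OF p] by blast
  qed (use a in auto)
qed

lemma dib2:
  assumes "y \<in> diblock H r" "y \<noteq> r" "snd H \<subseteq> fst H \<times> fst H"
  shows "\<exists>P Q. path_from_to H r y P \<and> path_from_to H r y Q \<and> (set P - {r, y}) \<inter> (set Q - {r, y}) = {}"
proof -
  have "bireachable H r y \<or> (r, y) \<in> snd H" using assms(1,2) unfolding diblock_def by blast
  then show ?thesis
  proof
    assume "(r, y) \<in> snd H"
    then have "path_from_to H r y [r, y]" unfolding path_from_to_def is_path_wlk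
      using assms(2,3) by auto
    then show ?thesis by fastforce
  next
    assume "bireachable H r y"
    then obtain P Q where PQ: "path_from_to H r y P" "path_from_to H r y Q" "interior P \<inter> interior Q = {}"
      unfolding bireachable_def by blast
    have "set P - {r, y} \<subseteq> interior P" using interior_cover[of P] PQ(1) unfolding path_from_to_def is_path_def by auto
    moreover have "set Q - {r, y} \<subseteq> interior Q" using interior_cover[of Q] PQ(2) unfolding path_from_to_def is_path_def by auto
    ultimately show ?thesis using PQ by blast
  qed
qed

lemma dib_avoid:
  assumes "y' \<in> diblock H r" "y \<noteq> r" "y \<noteq> y'" "snd H \<subseteq> fst H \<times> fst H" "r \<in> fst H"
  shows "\<exists>P. path_from_to H r y' P \<and> y \<notin> set P"
proof (cases "y' = r")
  case True
  have "path_from_to H r r [r]" unfolding path_from_to_def is_path_wlk using assms(5) by auto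
  then show ?thesis using True assms(2) by auto
next
  case False
  obtain P Q where PQ: "path_from_to H r y' P" "path_from_to H r y' Q" "(set P - {r, y'}) \<inter> (set Q - {r, y'}) = {}"
    using dib2[OF assms(1) False assms(4)] by blast
  then show ?thesis using assms(2,3) by blast
qed

lemma filter_last_split:
  assumes "filter P xs \<noteq> []" "last (filter P xs) = y"
  shows "\<exists>b1 b2. xs = b1 @ y # b2 \<and> P y \<and> (\<forall>w\<in>set b2. \<not> P w)"
  using assms
proof (induction xs rule: rev_induct)
  case (snoc x xs)
  show ?case
  proof (cases "P x")
    case True
    then have "y = x" using snoc(3) by simp
    then show ?thesis using True by (intro exI[of _ xs] exI[of _ "[]"]) auto
  next
    case False
    then obtain b1 b2 where "xs = b1 @ y # b2" "P y" "\<forall>w\<in>set b2. \<not> P w" using snoc by auto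
    then show ?thesis using False by (intro exI[of _ b1] exI[of _ "b2 @ [x]"]) auto
  qed
qed simp

lemma cd_sub:
  assumes dg: "digraph D" and sV: "s \<in> fst D" and cd: "cd_node D s y Hy"
  shows "fst Hy \<subseteq> fst D \<and> snd Hy = snd D \<inter> (fst Hy \<times> fst Hy) \<and> y \<in> fst Hy"
  using cd
proof (induction rule: cd_node.induct)
  case root
  then show ?case using digraphD(2)[OF dg] sV by auto
next
  case (child x Hx y)
  have hx: "snd Hx \<subseteq> fst Hx \<times> fst Hx" "x \<in> fst Hx" using child.IH by auto
  have "y \<in> diblock Hx x" using child.hyps(2) unfolding bottleneck_def by blast
  then have yin: "y \<in> fst Hx" using diblock_sub[OF hx] by blast
  have "Xset Hx x y \<subseteq> fst Hx" unfolding Xset_def by blast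
  then show ?case using child.IH yin unfolding induced_def by auto
qed



lemma path_split2:
  assumes "path_from_to H a b (p1 @ c # p2)"
  shows "path_from_to H a c (p1 @ [c]) \<and> path_from_to H c b (c # p2)"
proof -
  let ?p = "p1 @ c # p2"
  have P: "distinct ?p" "set ?p \<subseteq> fst H" "wlk (snd H) ?p" "hd ?p = a" "last ?p = b"
    using assms(1) unfolding path_from_to_def is_path_wlk by auto
  have w: "wlk (snd H) ((p1 @ [c]) @ p2)" using P(3) by simp
  have w1: "wlk (snd H) (p1 @ [c])" using wlk_prefix[OF w] by simp
  have w2: "wlk (snd H) (c # p2)" using wlk_suffix[of _ p1 "c # p2"] P(3) by simp
  have "path_from_to H a c (p1 @ [c])"
    unfolding path_from_to_def is_path_wlk using P w1 by (cases p1) auto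
  moreover have "path_from_to H c b (c # p2)"
    unfolding path_from_to_def is_path_wlk using P w2 by (cases p2) auto
  ultimately show ?thesis by blast
qed

lemma wlk_cat:
  assumes "wlk E p" "wlk E q" "last p = hd q"
  shows "wlk E (p @ tl q) \<and> hd (p @ tl q) = hd p \<and> last (p @ tl q) = last q \<and> set (p @ tl q) = set p \<union> set q"
proof -
  obtain p' a where p': "p = p' @ [a]" using assms(1) by (cases p rule: rev_cases) auto
  obtain b q' where q': "q = b # q'" using assms(2) by (cases q) auto
  have ab: "a = b" using assms(3) p' q' by simp
  have "wlk E (p' @ [a])" using assms(1) p' by simp
  moreover have "wlk E (a # q')" using assms(2) q' ab by simp
  ultimately have "wlk E (p' @ a # q')" by (rule wlk_join)
  then show ?thesis using p' q' ab by (cases q'; cases p') auto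
qed

lemma path_wlk: "path_from_to H a b p \<Longrightarrow> wlk (snd H) p \<and> hd p = a \<and> last p = b \<and> set p \<subseteq> fst H \<and> distinct p"
  unfolding path_from_to_def is_path_wlk by auto

lemma filter_last_in: "filter P xs \<noteq> [] \<Longrightarrow> last (filter P xs) \<in> set xs"
proof -
  assume "filter P xs \<noteq> []"
  then have "last (filter P xs) \<in> set (filter P xs)" by (rule last_in_set)
  then show ?thesis by simp
qed

lemma filter_ne: "x \<in> set xs \<Longrightarrow> P x \<Longrightarrow> filter P xs \<noteq> []"
  by (induct xs) auto



lemma cd_inv:
  assumes dg: "digraph D" and sV: "s \<in> fst D" and cd: "cd_node D s y Hy"
  shows "\<forall>v p. v \<in> fst Hy \<longrightarrow> path_from_to D s v p \<longrightarrow>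
           (\<exists>a b. p = a @ b \<and> b \<noteq> [] \<and> hd b = y \<and> set b \<subseteq> fst Hy)"
  using cd
proof (induction rule: cd_node.induct)
  case root
  show ?case
  proof (intro allI impI)
    fix v p assume "v \<in> fst D" "path_from_to D s v p"
    then show "\<exists>a b. p = a @ b \<and> b \<noteq> [] \<and> hd b = s \<and> set b \<subseteq> fst D"
      unfolding path_from_to_def is_path_def by (intro exI[of _ "[]"] exI[of _ p]) auto
  qed
next
  case (child x Hx y)
  let ?B = "diblock Hx x" and ?X = "Xset Hx x y"
  have sx: "fst Hx \<subseteq> fst D \<and> snd Hx = snd D \<inter> (fst Hx \<times> fst Hx) \<and> x \<in> fst Hx"
    using cd_sub[OF dg sV child.hyps(1)] .
  have hx: "snd Hx \<subseteq> fst Hx \<times> fst Hx" "x \<in> fst Hx" using sx by auto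
  have yB: "y \<in> ?B" "y \<noteq> x" using child.hyps(2) unfolding bottleneck_def by auto
  have xB: "x \<in> ?B" unfolding diblock_def by blast
  have yHx: "y \<in> fst Hx" using diblock_sub[OF hx] yB by blast
  have XHx: "?X \<subseteq> fst Hx" unfolding Xset_def by blast
  have fHy: "fst (induced Hx (?X \<union> {y})) = ?X \<union> {y}" unfolding induced_def by simp
  show ?case
  proof (intro allI impI)
    fix v p assume v: "v \<in> fst (induced Hx (?X \<union> {y}))" and p: "path_from_to D s v p"
    have vHx: "v \<in> fst Hx" using v fHy XHx yHx by blast
    have "\<exists>a b. p = a @ b \<and> b \<noteq> [] \<and> hd b = x \<and> set b \<subseteq> fst Hx"
      using child.IH vHx p by blast
    then obtain a b where ab: "p = a @ b" "b \<noteq> []" "hd b = x" "set b \<subseteq> fst Hx" by blast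
    have pP: "distinct p" "wlk (snd D) p" "last p = v" using p unfolding path_from_to_def is_path_wlk by auto
    have bpath: "path_from_to Hx x v b"
    proof -
      have "wlk (snd D) b" using wlk_suffix[of _ a b] pP(2) ab by simp
      then have "wlk (snd D \<inter> (fst Hx \<times> fst Hx)) b" using wlk_restrict ab(4) by blast
      then have "wlk (snd Hx) b" using sx by simp
      moreover have "distinct b" using pP(1) ab(1) by simp
      moreover have "last b = v" using pP(3) ab by simp
      ultimately show ?thesis unfolding path_from_to_def is_path_wlk using ab by simp
    qed
    show "\<exists>a b. p = a @ b \<and> b \<noteq> [] \<and> hd b = y \<and> set b \<subseteq> fst (induced Hx (?X \<union> {y}))"
    proof (cases "v = y")
      case True
      have "p \<noteq> []" using p unfolding path_from_to_def is_path_def by simp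
      then obtain p' where p': "p = p' @ [y]" using pP(3) True by (cases p rule: rev_cases) auto
      have "set [y] \<subseteq> fst (induced Hx (?X \<union> {y}))" using fHy by simp
      then show ?thesis using p' by (intro exI[of _ p'] exI[of _ "[y]"]) simp
    next
      case False
      then have vX: "v \<in> ?X" using v fHy by blast
      have lf: "last (filter (\<lambda>w. w \<in> ?B) b) = y" using vX bpath unfolding Xset_def by blast
      have fne: "filter (\<lambda>w. w \<in> ?B) b \<noteq> []" using ab(2,3) xB by (cases b) auto
      obtain b1 b2 where bb: "b = b1 @ y # b2" "\<forall>w\<in>set b2. w \<notin> ?B"
        using filter_last_split[OF fne lf] by blast
      have b2X: "set b2 \<subseteq> ?X"
      proof
        fix w assume w: "w \<in> set b2"
        obtain c1 c2 where cc: "b2 = c1 @ w # c2" using split_list[OF w] by blast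
        have wB: "w \<notin> ?B" using bb w by blast
        have wHx: "w \<in> fst Hx" using ab(4) bb w by auto
        have bdec: "b = (b1 @ y # c1) @ w # c2" using bb cc by simp
        have pre: "path_from_to Hx x w ((b1 @ y # c1) @ [w])"
          using path_split2[of Hx x v "b1 @ y # c1" w c2] bpath bdec by simp
        have suf: "path_from_to Hx w v (w # c2)"
          using path_split2[of Hx x v "b1 @ y # c1" w c2] bpath bdec by simp
        have c2B: "\<forall>u\<in>set (w # c2). u \<notin> ?B" using bb cc by auto
        have allp: "\<forall>r. path_from_to Hx x w r \<longrightarrow> last (filter (\<lambda>u. u \<in> ?B) r) = y"
        proof (intro allI impI)
          fix r assume r: "path_from_to Hx x w r"
          show "last (filter (\<lambda>u. u \<in> ?B) r) = y"
          proof (rule ccontr)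
            assume ne: "last (filter (\<lambda>u. u \<in> ?B) r) \<noteq> y"
            define y' where "y' = last (filter (\<lambda>u. u \<in> ?B) r)"
            have rne: "r \<noteq> []" "hd r = x" using r unfolding path_from_to_def is_path_def by auto
            have fne2: "filter (\<lambda>u. u \<in> ?B) r \<noteq> []" using rne xB by (cases r) auto
            obtain r1 r2 where rr: "r = r1 @ y' # r2" "y' \<in> ?B" "\<forall>u\<in>set r2. u \<notin> ?B"
              using filter_last_split[OF fne2 y'_def[symmetric]] by blast
            have r2p: "path_from_to Hx y' w (y' # r2)" using path_split2[of Hx x w r1 y' r2] r rr(1) by simp
            have yy': "y \<noteq> y'" using ne y'_def by simp
            obtain P0 where P0: "path_from_to Hx x y' P0" "y \<notin> set P0"
              using dib_avoid[OF rr(2) yB(2) yy' hx] by blast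
            have w1: "wlk (snd Hx) (P0 @ tl (y' # r2)) \<and> hd (P0 @ tl (y' # r2)) = hd P0 \<and>
                last (P0 @ tl (y' # r2)) = last (y' # r2) \<and> set (P0 @ tl (y' # r2)) = set P0 \<union> set (y' # r2)"
              using wlk_cat[of "snd Hx" P0 "y' # r2"] path_wlk[OF P0(1)] path_wlk[OF r2p] by simp
            let ?W1 = "P0 @ tl (y' # r2)"
            have w2: "wlk (snd Hx) (?W1 @ tl (w # c2)) \<and> hd (?W1 @ tl (w # c2)) = hd ?W1 \<and>
                last (?W1 @ tl (w # c2)) = last (w # c2) \<and> set (?W1 @ tl (w # c2)) = set ?W1 \<union> set (w # c2)"
              using wlk_cat[of "snd Hx" ?W1 "w # c2"] w1 path_wlk[OF r2p] path_wlk[OF suf] by simp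
            let ?W = "?W1 @ tl (w # c2)"
            have Wset: "set ?W \<subseteq> fst Hx" using w1 w2 path_wlk[OF P0(1)] path_wlk[OF r2p] path_wlk[OF suf] by auto
            have yW: "y \<notin> set ?W"
            proof -
              have "y \<notin> set r2" using rr(3) yB(1) by blast
              moreover have "y \<notin> set (w # c2)" using c2B yB(1) by blast
              ultimately show ?thesis using w1 w2 P0(2) yy' by simp
            qed
            obtain q where q: "path_from_to Hx x v q" "set q \<subseteq> set ?W"
              using wlk_path[of Hx ?W x v] w1 w2 Wset path_wlk[OF P0(1)] path_wlk[OF suf] by auto
            have "last (filter (\<lambda>u. u \<in> ?B) q) = y" using vX q(1) unfolding Xset_def by blast
            moreover have "filter (\<lambda>u. u \<in> ?B) q \<noteq> []"
              using path_hd_in[OF q(1)] xB by (intro filter_ne[of x]) auto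
            ultimately have "y \<in> set q" using filter_last_in by metis
            then show False using q(2) yW by blast
          qed
        qed
        have "\<exists>r. path_from_to Hx x w r" using pre by blast
        then show "w \<in> ?X" unfolding Xset_def using wHx wB allp by blast
      qed
      have "p = (a @ b1) @ (y # b2)" using ab(1) bb(1) by simp
      moreover have "set (y # b2) \<subseteq> fst (induced Hx (?X \<union> {y}))" using b2X fHy by auto
      ultimately show ?thesis by (intro exI[of _ "a @ b1"] exI[of _ "y # b2"]) simp
    qed
  qed
qed

lemma cd_dom:
  assumes "digraph D" "s \<in> fst D" "cd_node D s y Hy" "v \<in> fst Hy" "path_from_to D s v p"
  shows "y \<in> set p"
proof -
  obtain a b where "p = a @ b" "b \<noteq> []" "hd b = y" using cd_inv[OF assms(1-3)] assms(4,5) by blast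
  then show ?thesis by (metis Un_iff hd_in_set set_append)
qed



lemma cd_facts:
  assumes dg: "digraph D" and sV: "s \<in> fst D" and cd: "cd_node D s x Hx"
  shows "fst Hx \<subseteq> fst D" "snd Hx \<subseteq> snd D" "snd Hx \<subseteq> fst Hx \<times> fst Hx" "x \<in> fst Hx"
    "snd Hx = snd D \<inter> (fst Hx \<times> fst Hx)"
  using cd_sub[OF dg sV cd] by auto

lemma path_avoids_X:
  assumes bn: "bottleneck Hx x y" and c: "path_from_to Hx x y c"
  shows "set c \<inter> Xset Hx x y = {}"
proof (rule ccontr)
  assume "set c \<inter> Xset Hx x y \<noteq> {}"
  then obtain w where w: "w \<in> set c" "w \<in> Xset Hx x y" by blast
  obtain c1 c2 where cc: "c = c1 @ w # c2" using split_list[OF w(1)] by blast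
  have pre: "path_from_to Hx x w (c1 @ [w])" using path_split2[of Hx x y c1 w c2] c cc by simp
  have lf: "last (filter (\<lambda>u. u \<in> diblock Hx x) (c1 @ [w])) = y" using w(2) pre unfolding Xset_def by blast
  have xB: "x \<in> diblock Hx x" unfolding diblock_def by blast
  have "filter (\<lambda>u. u \<in> diblock Hx x) (c1 @ [w]) \<noteq> []"
    using path_hd_in[OF pre] xB by (intro filter_ne[of x]) auto
  then have "y \<in> set (c1 @ [w])" using lf using filter_last_in by metis
  moreover have "w \<noteq> y" using w(2) bn unfolding Xset_def bottleneck_def by blast
  ultimately have y1: "y \<in> set c1" by simp
  have "last c = y" using c unfolding path_from_to_def by simp
  then have "y \<in> set (w # c2)" using cc by (metis last_appendR last_in_set list.discI)
  moreover have "distinct c" using c unfolding path_from_to_def is_path_def by simp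
  ultimately show False using y1 cc by auto
qed

lemma cd_child_arc:
  assumes dg: "digraph D" and sV: "s \<in> fst D" and ch: "cd_child D s x z" and c2: "card (cd_bag D s x) = 2"
  shows "(x, z) \<in> snd D"
proof -
  obtain Hx where h: "cd_node D s x Hx" "bottleneck Hx x z" using ch unfolding cd_child_def by blast
  note F = cd_facts[OF dg sV h(1)]
  have zB: "z \<in> diblock Hx x" "z \<noteq> x" using h(2) unfolding bottleneck_def by auto
  have sub: "diblock Hx x \<subseteq> cd_bag D s x" unfolding cd_bag_def using h(1) by blast
  have fin: "finite (cd_bag D s x)" by (rule card_ge_0_finite) (simp add: c2)
  show ?thesis
  proof (rule ccontr)
    assume na: "(x, z) \<notin> snd D"
    then have na2: "(x, z) \<notin> snd Hx" using F(2) by blast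
    then have "bireachable Hx x z" using zB unfolding diblock_def by blast
    then obtain P where P: "path_from_to Hx x z P" unfolding bireachable_def by blast
    have Pw: "wlk (snd Hx) P" "hd P = x" "last P = z" "distinct P" using path_wlk[OF P] by auto
    obtain w rest where Pd: "P = x # w # rest" "rest \<noteq> []"
    proof (cases P)
      case Nil then show ?thesis using Pw by simp
    next
      case (Cons a l)
      then have a: "a = x" using Pw by simp
      show ?thesis
      proof (cases l)
        case Nil then show ?thesis using Cons a Pw zB by simp
      next
        case (Cons w rest)
        show ?thesis
        proof (cases rest)
          case Nil
          then have "P = [x, z]" using \<open>P = a # l\<close> a Cons Pw by simp
          then show ?thesis using Pw na2 by simp
        next
          case (Cons b r)
          then show ?thesis using that \<open>P = a # l\<close> a \<open>l = w # rest\<close> by blast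
        qed
      qed
    qed
    have xw: "(x, w) \<in> snd Hx" using Pw(1) Pd by simp
    have wx: "w \<noteq> x" using Pw(4) Pd by auto
    have wz: "w \<noteq> z"
    proof
      assume "w = z"
      moreover have "last P \<in> set rest" using Pd by simp
      ultimately show False using Pw(3,4) Pd last_in_set[of rest] by auto
    qed
    have wB: "w \<in> diblock Hx x" using xw unfolding diblock_def by blast
    have xB: "x \<in> diblock Hx x" unfolding diblock_def by blast
    have "{x, z, w} \<subseteq> cd_bag D s x" using sub wB xB zB by blast
    then have "card {x, z, w} \<le> 2" using card_mono[OF fin] c2 by metis
    moreover have "card {x, z, w} = 3" using wx wz zB(2) by auto
    ultimately show False by simp
  qed
qed

lemma cd_child_dom:
  assumes dg: "digraph D" and sV: "s \<in> fst D" and ch: "cd_child D s x z" and p: "path_from_to D s z p"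
  shows "x \<in> set p"
proof -
  obtain Hx where h: "cd_node D s x Hx" "bottleneck Hx x z" using ch unfolding cd_child_def by blast
  note F = cd_facts[OF dg sV h(1)]
  have "z \<in> diblock Hx x" using h(2) unfolding bottleneck_def by auto
  then have "z \<in> fst Hx" using diblock_sub[OF F(3,4)] by blast
  then show ?thesis using cd_dom[OF dg sV h(1) _ p] by blast
qed



lemma route:
  assumes dg: "digraph D" and sV: "s \<in> fst D" and cd: "cd_node D s y Hy"
  shows "\<forall>Hd. finite Hd \<longrightarrow> (\<forall>u\<in>Hd. \<exists>p. path_from_to D s y p \<and> u \<notin> set p) \<longrightarrow>
     (\<exists>W. s \<in> W \<and> y \<in> W \<and> W \<subseteq> fst D \<and> W \<inter> fst Hy \<subseteq> {y} \<and>
          (\<forall>w\<in>W. (s, w) \<in> (snd D \<inter> (W \<times> W))\<^sup>*) \<and> 2 * card (Hd \<inter> W) \<le> card (Hd - fst Hy))"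
  using cd
proof (induction rule: cd_node.induct)
  case root
  show ?case
  proof (intro allI impI)
    fix Hd :: "'a set" assume fin: "finite Hd" and av: "\<forall>u\<in>Hd. \<exists>p. path_from_to D s s p \<and> u \<notin> set p"
    have "s \<notin> Hd"
    proof
      assume "s \<in> Hd"
      then obtain p where "path_from_to D s s p" "s \<notin> set p" using av by blast
      then show False using path_hd_in by metis
    qed
    then have c0: "card (Hd \<inter> {s}) = 0" by simp
    show "\<exists>W. s \<in> W \<and> s \<in> W \<and> W \<subseteq> fst D \<and> W \<inter> fst D \<subseteq> {s} \<and>
          (\<forall>w\<in>W. (s, w) \<in> (snd D \<inter> (W \<times> W))\<^sup>*) \<and> 2 * card (Hd \<inter> W) \<le> card (Hd - fst D)"
      using sV c0 by (intro exI[of _ "{s}"]) auto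
  qed
next
  case (child x Hx y)
  let ?B = "diblock Hx x" and ?X = "Xset Hx x y"
  let ?Hy = "induced Hx (?X \<union> {y})"
  note F = cd_facts[OF dg sV child.hyps(1)]
  have yB: "y \<in> ?B" "y \<noteq> x" using child.hyps(2) unfolding bottleneck_def by auto
  have xB: "x \<in> ?B" unfolding diblock_def by blast
  have yHx: "y \<in> fst Hx" using diblock_sub[OF F(3,4)] yB by blast
  have XHx: "?X \<subseteq> fst Hx" unfolding Xset_def by blast
  have xX: "x \<notin> ?X" using xB unfolding Xset_def by blast
  have fHy: "fst ?Hy = ?X \<union> {y}" unfolding induced_def by simp
  show ?case
  proof (intro allI impI)
    fix Hd :: "'a set" assume fin: "finite Hd" and av: "\<forall>u\<in>Hd. \<exists>p. path_from_to D s y p \<and> u \<notin> set p"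
    have dom: "x \<in> set p" if "path_from_to D s y p" for p
      using cd_dom[OF dg sV child.hyps(1) yHx that] .
    have avx: "\<forall>u\<in>Hd. \<exists>p. path_from_to D s x p \<and> u \<notin> set p"
    proof
      fix u assume "u \<in> Hd"
      then obtain p where p: "path_from_to D s y p" "u \<notin> set p" using av by blast
      obtain p1 p2 where "p = p1 @ x # p2" using split_list[OF dom[OF p(1)]] by blast
      then have "path_from_to D s x (p1 @ [x])" using path_split2[of D s y p1 x p2] p(1) by simp
      moreover have "u \<notin> set (p1 @ [x])" using p(2) \<open>p = p1 @ x # p2\<close> by auto
      ultimately show "\<exists>p. path_from_to D s x p \<and> u \<notin> set p" by blast
    qed
    have xHd: "x \<notin> Hd"
    proof
      assume "x \<in> Hd"
      then obtain p where "path_from_to D s y p" "x \<notin> set p" using av by blast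
      then show False using dom by metis
    qed
    have yHd: "y \<notin> Hd"
    proof
      assume "y \<in> Hd"
      then obtain p where "path_from_to D s y p" "y \<notin> set p" using av by blast
      then show False using path_last_in by metis
    qed
    obtain W0 where W0: "s \<in> W0" "x \<in> W0" "W0 \<subseteq> fst D" "W0 \<inter> fst Hx \<subseteq> {x}"
      "\<forall>w\<in>W0. (s, w) \<in> (snd D \<inter> (W0 \<times> W0))\<^sup>*" "2 * card (Hd \<inter> W0) \<le> card (Hd - fst Hx)"
      using child.IH[THEN spec[of _ Hd], THEN mp, THEN mp, OF fin avx] by blast
    obtain P Q where PQ: "path_from_to Hx x y P" "path_from_to Hx x y Q"
      "(set P - {x, y}) \<inter> (set Q - {x, y}) = {}"
      using dib2[OF yB(1) yB(2) F(3)] by blast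
    have PX: "set P \<inter> ?X = {}" using path_avoids_X[OF child.hyps(2) PQ(1)] .
    have QX: "set Q \<inter> ?X = {}" using path_avoids_X[OF child.hyps(2) PQ(2)] .
    have PH: "set P \<subseteq> fst Hx" "set Q \<subseteq> fst Hx" using path_set[OF PQ(1)] path_set[OF PQ(2)] by auto
    obtain c where c: "path_from_to Hx x y c" "set c \<inter> ?X = {}"
      "2 * card (Hd \<inter> (set c - {x, y})) \<le> card (Hd \<inter> (set P - {x, y})) + card (Hd \<inter> (set Q - {x, y}))"
    proof (cases "card (Hd \<inter> (set P - {x, y})) \<le> card (Hd \<inter> (set Q - {x, y}))")
      case True
      then show ?thesis using that[of P] PQ(1) PX by simp
    next
      case False
      then show ?thesis using that[of Q] PQ(2) QX by simp
    qed
    have cw: "wlk (snd Hx) c" "hd c = x" "last c = y" "set c \<subseteq> fst Hx" using path_wlk[OF c(1)] by auto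
    define W where "W = W0 \<union> set c"
    have sW: "s \<in> W" using W0 unfolding W_def by blast
    have yW: "y \<in> W" using path_last_in[OF c(1)] unfolding W_def by blast
    have WV: "W \<subseteq> fst D" using W0(3) cw(4) F(1) unfolding W_def by blast
    have WHy: "W \<inter> fst ?Hy \<subseteq> {y}"
    proof -
      have "W0 \<inter> fst ?Hy = {}" using W0(4) fHy XHx yHx xX yB(2) by blast
      then show ?thesis using c(2) fHy unfolding W_def by blast
    qed
    have reach: "\<forall>w\<in>W. (s, w) \<in> (snd D \<inter> (W \<times> W))\<^sup>*"
    proof
      fix w assume w: "w \<in> W"
      have mono: "(snd D \<inter> (W0 \<times> W0))\<^sup>* \<subseteq> (snd D \<inter> (W \<times> W))\<^sup>*"
        by (rule rtrancl_mono) (auto simp: W_def)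
      show "(s, w) \<in> (snd D \<inter> (W \<times> W))\<^sup>*"
      proof (cases "w \<in> W0")
        case True then show ?thesis using W0(5) mono by blast
      next
        case False
        then have wc: "w \<in> set c" using w unfolding W_def by blast
        have "wlk (snd D) c" using wlk_mono[OF cw(1) F(2)] .
        then have "wlk (snd D \<inter> (W \<times> W)) c" using wlk_restrict[of "snd D" c W] unfolding W_def by blast
        then have "(x, w) \<in> (snd D \<inter> (W \<times> W))\<^sup>*" using wlk_rtrancl wc cw(2) by metis
        moreover have "(s, x) \<in> (snd D \<inter> (W \<times> W))\<^sup>*" using W0(2,5) mono by blast
        ultimately show ?thesis by simp
      qed
    qed
    have count: "2 * card (Hd \<inter> W) \<le> card (Hd - fst ?Hy)"
    proof -
      let ?IP = "Hd \<inter> (set P - {x, y})" and ?IQ = "Hd \<inter> (set Q - {x, y})" and ?Ic = "Hd \<inter> (set c - {x, y})"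
      have "Hd \<inter> W \<subseteq> (Hd \<inter> W0) \<union> ?Ic" using xHd yHd unfolding W_def by blast
      then have "card (Hd \<inter> W) \<le> card ((Hd \<inter> W0) \<union> ?Ic)" using fin by (intro card_mono) auto
      also have "\<dots> \<le> card (Hd \<inter> W0) + card ?Ic" by (rule card_Un_le)
      finally have a: "2 * card (Hd \<inter> W) \<le> card (Hd - fst Hx) + card ?IP + card ?IQ"
        using W0(6) c(3) by linarith
      have d1: "(Hd - fst Hx) \<inter> ?IP = {}" using PH by blast
      have d2: "((Hd - fst Hx) \<union> ?IP) \<inter> ?IQ = {}" using PH PQ(3) by blast
      have "card (Hd - fst Hx) + card ?IP + card ?IQ = card ((Hd - fst Hx) \<union> ?IP \<union> ?IQ)"
        using fin d1 d2 by (simp add: card_Un_disjoint)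
      also have "\<dots> \<le> card (Hd - fst ?Hy)"
      proof (rule card_mono)
        show "finite (Hd - fst ?Hy)" using fin by simp
        show "(Hd - fst Hx) \<union> ?IP \<union> ?IQ \<subseteq> Hd - fst ?Hy"
          using fHy XHx yHx PX QX by blast
      qed
      finally show ?thesis using a by linarith
    qed
    show "\<exists>W. s \<in> W \<and> y \<in> W \<and> W \<subseteq> fst D \<and> W \<inter> fst ?Hy \<subseteq> {y} \<and>
          (\<forall>w\<in>W. (s, w) \<in> (snd D \<inter> (W \<times> W))\<^sup>*) \<and> 2 * card (Hd \<inter> W) \<le> card (Hd - fst ?Hy)"
      using sW yW WV WHy reach count by blast
  qed
qed



lemma tstr_reach_V: "tstr V E s T \<Longrightarrow> (s, w) \<in> T\<^sup>* \<Longrightarrow> w \<in> V"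
proof -
  assume t: "tstr V E s T" and r: "(s, w) \<in> T\<^sup>*"
  have TV: "T \<subseteq> V \<times> V" "s \<in> V" using tstrD[OF t] by auto
  from r show "w \<in> V" by (induction rule: rtrancl_induct) (use TV in auto)
qed

lemma tstr_E_mono: "tstr V E s T \<Longrightarrow> E \<subseteq> E' \<Longrightarrow> tstr V E' s T"
  unfolding tstr_def by blast

theorem corollary3:
  fixes D :: "'a dg" and s t :: 'a and k :: int and xs :: "'a list"
  assumes "digraph D"
    and "reduced D s t"
    and "degenerate_path D s xs"
    and "\<forall>i j u. i < j \<and> j < length xs \<longrightarrow>
           \<not> ((xs ! i, u) \<in> Aplus D s xs \<inter> Rt D t \<and> (xs ! j, u) \<in> Aplus D s xs \<inter> Rt D t)"
    and "\<not> positive_instance D s t k"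
  shows "int (card (Aplus D s xs \<inter> Rt D t)) \<le> 2 * k + 1"
proof (rule ccontr)
  assume neg: "\<not> int (card (Aplus D s xs \<inter> Rt D t)) \<le> 2 * k + 1"
  define F where "F = Aplus D s xs \<inter> Rt D t"
  note dg = assms(1)
  note G = digraphD[OF dg]
  obtain T0 where T0: "out_branching D s T0" using assms(2) unfolding reduced_def by blast
  note t0 = out_branching_tstr[OF dg T0]
  have sV: "s \<in> fst D" using tstrD(3)[OF t0] .
  obtain Tm where Tm: "in_branching D t Tm" using assms(2) unfolding reduced_def by blast
  have reachD: "\<forall>v\<in>fst D. (s, v) \<in> (snd D)\<^sup>*"
  proof
    fix v assume "v \<in> fst D"
    then have "(s, v) \<in> T0\<^sup>*" using tstrD(7)[OF t0] by blast
    moreover have "T0\<^sup>* \<subseteq> (snd D)\<^sup>*" using tstrD(1)[OF t0] by (rule rtrancl_mono)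
    ultimately show "(s, v) \<in> (snd D)\<^sup>*" by blast
  qed
  have xsne: "xs \<noteq> []" and degall: "\<forall>x\<in>set xs. cd_degenerate D s x"
    and chain: "\<forall>i. Suc i < length xs \<longrightarrow> cd_child D s (xs ! i) (xs ! Suc i)"
    using assms(3) unfolding degenerate_path_def by auto
  define x0 where "x0 = xs ! 0"
  have x0in: "x0 \<in> set xs" using xsne unfolding x0_def by simp
  obtain z0 where "cd_child D s x0 z0" using degall x0in unfolding cd_degenerate_def by blast
  then obtain H0 where H0: "cd_node D s x0 H0" unfolding cd_child_def by blast
  have arcs: "\<forall>i. Suc i < length xs \<longrightarrow> (xs ! i, xs ! Suc i) \<in> snd D"
  proof (intro allI impI)
    fix i assume i: "Suc i < length xs"
    have "xs ! i \<in> set xs" using i by simp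
    then have "card (cd_bag D s (xs ! i)) = 2" using degall unfolding cd_degenerate_def by blast
    then show "(xs ! i, xs ! Suc i) \<in> snd D" using cd_child_arc[OF dg sV] chain i by blast
  qed
  have dom: "\<forall>p. path_from_to D s (xs ! i) p \<longrightarrow> x0 \<in> set p" if "i < length xs" for i
    using that
  proof (induction i)
    case 0
    show ?case unfolding x0_def
    proof (intro allI impI)
      fix p assume "path_from_to D s (xs ! 0) p"
      then show "xs ! 0 \<in> set p" by (rule path_last_in)
    qed
  next
    case (Suc i)
    show ?case
    proof (intro allI impI)
      fix p assume p: "path_from_to D s (xs ! Suc i) p"
      have "xs ! i \<in> set p" using cd_child_dom[OF dg sV _ p] chain Suc(2) by blast
      then obtain p1 p2 where pp: "p = p1 @ xs ! i # p2" using split_list by metis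
      then have "path_from_to D s (xs ! i) (p1 @ [xs ! i])" using path_split2[of D s _ p1 "xs ! i" p2] p by simp
      moreover have "i < length xs" using Suc(2) by simp
      ultimately have "x0 \<in> set (p1 @ [xs ! i])" using Suc(1) by blast
      then show "x0 \<in> set p" using pp by auto
    qed
  qed
  have finV: "finite (fst D)" using G(1) .
  have finD: "finite (snd D)" using finite_subset[OF G(2)] finV by blast
  have FD: "F \<subseteq> snd D" unfolding F_def Aplus_def by blast
  have finF: "finite F" using finite_subset[OF FD finD] .
  have Fx: "\<forall>f\<in>F. fst f \<in> set xs \<and> snd f \<notin> set xs" unfolding F_def Aplus_def by auto
  have FRt: "\<forall>f\<in>F. \<not> (\<exists>T. in_branching D t T \<and> f \<in> T)" unfolding F_def Rt_def by auto
  have inj: "inj_on snd F"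
  proof (rule inj_onI)
    fix f g assume f: "f \<in> F" and g: "g \<in> F" and eq: "snd f = snd g"
    obtain i where i: "i < length xs" "fst f = xs ! i" using Fx f by (metis in_set_conv_nth)
    obtain j where j: "j < length xs" "fst g = xs ! j" using Fx g by (metis in_set_conv_nth)
    have fe: "(xs ! i, snd f) = f" using i(2) by (cases f) simp
    have ge: "(xs ! j, snd f) = g" using j(2) eq by (cases g) simp
    have fi: "(xs ! i, snd f) \<in> Aplus D s xs \<inter> Rt D t" using f fe unfolding F_def by simp
    have gj: "(xs ! j, snd f) \<in> Aplus D s xs \<inter> Rt D t" using g ge unfolding F_def by simp
    have "\<not> i < j"
    proof
      assume "i < j"
      then show False using assms(4)[rule_format, of i j "snd f"] j(1) fi gj by blast
    qed
    moreover have "\<not> j < i"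
    proof
      assume "j < i"
      then show False using assms(4)[rule_format, of j i "snd f"] i(1) fi gj by blast
    qed
    ultimately have "i = j" by simp
    then show "f = g" using fe ge by metis
  qed
  define Hd where "Hd = snd ` F"
  have finHd: "finite Hd" unfolding Hd_def using finF by simp
  have avoid: "\<forall>u\<in>Hd. \<exists>p. path_from_to D s x0 p \<and> u \<notin> set p"
  proof
    fix u assume "u \<in> Hd"
    then obtain x where xu: "(x, u) \<in> F" unfolding Hd_def by force
    have "(x, u) \<in> snd D" using xu FD by blast
    then have "(\<exists>T. out_branching D s T \<and> (x, u) \<in> T) \<or> (\<exists>T. in_branching D t T \<and> (x, u) \<in> T)"
      using assms(2) unfolding reduced_def by blast
    then obtain T where T: "out_branching D s T" "(x, u) \<in> T" using FRt xu by blast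
    note tT = out_branching_tstr[OF dg T(1)]
    have xV: "x \<in> fst D" "u \<in> fst D" using tstrD(2)[OF tT] T(2) by auto
    have "(s, x) \<in> T\<^sup>*" using tstrD(7)[OF tT] xV by blast
    then obtain q where q: "wlk T q" "hd q = s" "last q = x" "set q \<subseteq> {w. (w, x) \<in> T\<^sup>*}"
      using rtrancl_wlk by metis
    have qV: "set q \<subseteq> fst D"
    proof
      fix w assume "w \<in> set q"
      then have "(s, w) \<in> T\<^sup>*" using wlk_rtrancl[OF q(1)] q(2) by metis
      then show "w \<in> fst D" using tstr_reach_V[OF tT] by blast
    qed
    have "wlk (snd D) q" using wlk_mono[OF q(1)] tstrD(1)[OF tT] by blast
    then obtain p where p: "path_from_to D s x p" "set p \<subseteq> set q"
      using wlk_path[of D q s x] qV q(2,3) by blast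
    obtain i where i: "i < length xs" "x = xs ! i" using Fx xu by (metis fst_conv in_set_conv_nth)
    have x0p: "x0 \<in> set p" using dom[OF i(1)] p(1) i(2) by blast
    have up: "u \<notin> set p"
    proof
      assume "u \<in> set p"
      then have "(u, x) \<in> T\<^sup>*" using p(2) q(4) by blast
      then have "(u, u) \<in> T\<^sup>+" using T(2) by (meson rtrancl_into_trancl1)
      moreover have "(s, u) \<in> T\<^sup>*" using tstrD(7)[OF tT] xV by blast
      ultimately show False using no_cycle[OF tstrD(4)[OF tT] tstrD(6)[OF tT]] by blast
    qed
    obtain p1 p2 where pp: "p = p1 @ x0 # p2" using split_list[OF x0p] by blast
    then have "path_from_to D s x0 (p1 @ [x0])" using path_split2[of D s x p1 x0 p2] p(1) by simp
    moreover have "u \<notin> set (p1 @ [x0])" using up pp by auto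
    ultimately show "\<exists>p. path_from_to D s x0 p \<and> u \<notin> set p" by blast
  qed
  obtain W where W: "s \<in> W" "x0 \<in> W" "W \<subseteq> fst D" "W \<inter> fst H0 \<subseteq> {x0}"
    "\<forall>w\<in>W. (s, w) \<in> (snd D \<inter> (W \<times> W))\<^sup>*" "2 * card (Hd \<inter> W) \<le> card (Hd - fst H0)"
    using route[OF dg sV H0, THEN spec[of _ Hd], THEN mp, THEN mp, OF finHd avoid] by blast
  define U where "U = W \<union> set xs"
  have xsU: "(s, xs ! i) \<in> (snd D \<inter> (U \<times> U))\<^sup>*" if "i < length xs" for i
    using that
  proof (induction i)
    case 0
    have "(s, x0) \<in> (snd D \<inter> (W \<times> W))\<^sup>*" using W(2,5) by blast
    moreover have "(snd D \<inter> (W \<times> W))\<^sup>* \<subseteq> (snd D \<inter> (U \<times> U))\<^sup>*" by (rule rtrancl_mono) (auto simp: U_def)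
    ultimately show ?case unfolding x0_def by blast
  next
    case (Suc i)
    then have "(s, xs ! i) \<in> (snd D \<inter> (U \<times> U))\<^sup>*" by simp
    moreover have "(xs ! i, xs ! Suc i) \<in> snd D \<inter> (U \<times> U)" using arcs Suc(2) unfolding U_def by auto
    ultimately show ?case by (rule rtrancl_into_rtrancl)
  qed
  have reachU: "\<forall>w\<in>U. (s, w) \<in> (snd D \<inter> (U \<times> U))\<^sup>*"
  proof
    fix w assume w: "w \<in> U"
    show "(s, w) \<in> (snd D \<inter> (U \<times> U))\<^sup>*"
    proof (cases "w \<in> W")
      case True
      have "(snd D \<inter> (W \<times> W))\<^sup>* \<subseteq> (snd D \<inter> (U \<times> U))\<^sup>*" by (rule rtrancl_mono) (auto simp: U_def)
      then show ?thesis using W(5) True by blast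
    next
      case False
      then have "w \<in> set xs" using w unfolding U_def by blast
      then obtain i where "i < length xs" "w = xs ! i" by (metis in_set_conv_nth)
      then show ?thesis using xsU by blast
    qed
  qed
  have UV: "U \<subseteq> fst D"
  proof
    fix w assume "w \<in> U"
    then have "(s, w) \<in> (snd D \<inter> (U \<times> U))\<^sup>*" using reachU by blast
    then show "w \<in> fst D" using sV G(2) by (induction rule: rtrancl_induct) auto
  qed
  have finU: "finite U" using finite_subset[OF UV finV] .
  have sU: "s \<in> U" using W(1) unfolding U_def by blast
  have HdU: "Hd \<inter> U = Hd \<inter> W" using Fx unfolding Hd_def U_def by auto
  have cnt: "2 * card (Hd \<inter> U) \<le> card Hd"
  proof -
    have "card (Hd - fst H0) \<le> card Hd" using finHd by (intro card_mono) auto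
    then show ?thesis unfolding HdU using W(6) by linarith
  qed
  have t00: "tstr {s} (snd D \<inter> (U \<times> U)) s {}" unfolding tstr_def by simp
  obtain TU where TU: "tstr U (snd D \<inter> (U \<times> U)) s TU"
    using extend[OF finU _ reachU _ t00] sU by blast
  have tU2: "tstr U (snd D) s TU" using tstr_E_mono[OF TU] by blast
  obtain T where T: "tstr (fst D) (snd D) s T" "TU \<subseteq> T" "\<forall>a v. (a, v) \<in> T \<longrightarrow> v \<in> U \<longrightarrow> (a, v) \<in> TU"
    using extend[OF finV G(2) reachD UV tU2] by blast
  define S where "S = {f \<in> F. snd f \<notin> U}"
  define T' where "T' = {a \<in> T. snd a \<notin> snd ` S} \<union> S"
  have SF: "S \<subseteq> F" unfolding S_def by blast
  have injS: "inj_on snd S" using inj_on_subset[OF inj SF] .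
  have Sx: "\<forall>f\<in>S. fst f \<in> U \<and> snd f \<notin> U" using Fx unfolding S_def U_def by auto
  note TT = tstrD[OF T(1)]
  note TUU = tstrD[OF TU]
  have t': "tstr (fst D) (snd D) s T'"
  proof -
    have f1: "T' \<subseteq> snd D" using TT(1) SF FD unfolding T'_def by blast
    have f2: "T' \<subseteq> fst D \<times> fst D" using f1 G(2) by blast
    have f4: "\<forall>a. (a, s) \<notin> T'"
    proof
      fix a show "(a, s) \<notin> T'" using TT(4) Sx sU unfolding T'_def by fastforce
    qed
    have f5: "\<forall>v\<in>fst D - {s}. \<exists>a. (a, v) \<in> T'"
    proof
      fix v assume v: "v \<in> fst D - {s}"
      show "\<exists>a. (a, v) \<in> T'"
      proof (cases "v \<in> snd ` S")
        case True
        then obtain f where "f \<in> S" "v = snd f" by blast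
        then show ?thesis unfolding T'_def by (metis UnI2 prod.collapse)
      next
        case False
        have "\<exists>a. (a, v) \<in> T" using TT(5) v by blast
        then show ?thesis using False unfolding T'_def by auto
      qed
    qed
    have f6: "\<forall>a b v. (a, v) \<in> T' \<longrightarrow> (b, v) \<in> T' \<longrightarrow> a = b"
    proof (intro allI impI)
      fix a b v assume a: "(a, v) \<in> T'" and b: "(b, v) \<in> T'"
      show "a = b"
      proof (cases "v \<in> snd ` S")
        case True
        then have "(a, v) \<in> S" "(b, v) \<in> S" using a b unfolding T'_def by auto
        then show ?thesis using injS unfolding inj_on_def by fastforce
      next
        case False
        have nS: "(a, v) \<notin> S" "(b, v) \<notin> S" using False by (force, force)
        have "(a, v) \<in> T" "(b, v) \<in> T" using a b nS unfolding T'_def by auto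
        then show ?thesis using TT(6) by blast
      qed
    qed
    have TUT': "TU \<subseteq> T'"
    proof
      fix e assume e: "e \<in> TU"
      then have "snd e \<in> U" using TUU(2) by auto
      then have "snd e \<notin> snd ` S" using Sx by auto
      then show "e \<in> T'" using e T(2) unfolding T'_def by blast
    qed
    have Ureach: "(s, w) \<in> T'\<^sup>*" if "w \<in> U" for w
    proof -
      have "(s, w) \<in> TU\<^sup>*" using TUU(7) that by blast
      moreover have "TU\<^sup>* \<subseteq> T'\<^sup>*" using TUT' by (rule rtrancl_mono)
      ultimately show ?thesis by blast
    qed
    have f7: "\<forall>v\<in>fst D. (s, v) \<in> T'\<^sup>*"
    proof
      fix v assume "v \<in> fst D"
      then have "(s, v) \<in> T\<^sup>*" using TT(7) by blast
      then show "(s, v) \<in> T'\<^sup>*"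
      proof (induction rule: rtrancl_induct)
        case (step y z)
        show ?case
        proof (cases "z \<in> snd ` S")
          case True
          then obtain f where f: "f \<in> S" "z = snd f" by auto
          then have "(fst f, z) \<in> T'" unfolding T'_def by simp
          moreover have "(s, fst f) \<in> T'\<^sup>*" using Ureach Sx f(1) by blast
          ultimately show ?thesis by (rule rtrancl_into_rtrancl[rotated])
        next
          case False
          then have "(y, z) \<in> T'" using step(2) unfolding T'_def by simp
          then show ?thesis using step(3) by (rule rtrancl_into_rtrancl[rotated])
        qed
      qed simp
    qed
    show ?thesis unfolding tstr_def using f1 f2 sV f4 f5 f6 f7 by (intro conjI) assumption+
  qed
  have ob': "out_branching D s T'" using tstr_out_branching[OF dg t'] .
  have ST': "S \<subseteq> T' - Tm"
  proof
    fix f assume f: "f \<in> S"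
    then have "f \<notin> Tm" using FRt SF Tm by blast
    then show "f \<in> T' - Tm" using f unfolding T'_def by blast
  qed
  have finT': "finite T'" using finite_subset[OF tstrD(1)[OF t'] finD] .
  have c1: "card S \<le> card (T' - Tm)" using card_mono[OF _ ST'] finT' by blast
  have imgS: "snd ` S = Hd - U" unfolding S_def Hd_def by auto
  have cS: "card S = card (Hd - U)" using card_image[OF injS] imgS by simp
  have cHd: "card Hd = card F" unfolding Hd_def using card_image[OF inj] .
  have "card ((Hd - U) \<union> (Hd \<inter> U)) = card (Hd - U) + card (Hd \<inter> U)"
    by (rule card_Un_disjoint) (use finHd in auto)
  moreover have "(Hd - U) \<union> (Hd \<inter> U) = Hd" by blast
  ultimately have split: "card Hd = card (Hd - U) + card (Hd \<inter> U)" by simp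
  have "int (card F) \<ge> 2 * k + 2" using neg unfolding F_def by linarith
  then have "int (card S) \<ge> k" using cS cHd split cnt by linarith
  then have "int (card (T' - Tm)) \<ge> k" using c1 by linarith
  then have "positive_instance D s t k" unfolding positive_instance_def using ob' Tm by blast
  then show False using assms(5) by blast
qed


end
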